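(* Let $\mathcal{X}=(X,\{R_i\}_{i=0}^d)$ be an association scheme with adjacency matrices $A_0,\dots,A_d$, valencies $k_0,\dots,k_d$ and intersection numbers $p_{ij}^k$, and let $W=\sum_{i=0}^dw_iA_i$ and $W'=\sum_{i=0}^dw'_iA_i$ be type-II matrices in its Bose--Mesner algebra. Suppose that $w_0,\dots,w_d$ are pairwise distinct and $w'_0,\dots,w'_d$ are pairwise distinct, that the valencies $k_0,\dots,k_d$ are pairwise distinct, and that $\min\{p_{11}^i\mid 0<i\leq d\}>\frac{|X|}{2}$. If $W$ and $W'$ are equivalent, then $W$ is a scalar multiple of $W'$.
   Context: An association scheme $(X,\{R_i\}_{i=0}^d)$ is a partition of $X\times X$ into relations $R_0=\{(x,x)\}$, $R_1,\dots,R_d$ such that for $(x,y)\in R_k$ the number $p_{ij}^k=|\{z:(x,z)\in R_i,(z,y)\in R_j\}|$ depends only on $i,j,k$ (and each transpose $R_i^\top$ is some $R_j$); $A_i$ is the $(0,1)$-matrix of $R_i$, the Bose--Mesner algebra is the span of the $A_i$, and the valency $k_i$ is the number of $y$ with $(x,y)\in R_i$ for any fixed $x$. A type-II matrix is an $n\times n$ matrix $W$ ($n=|X|$) with nonzero complex entries such that $W(W^{(-)})^\top=nI$, $W^{(-)}$ the entrywise inverse. $W,W'$ are equivalent if there exist invertible diagonal matrices $D,D'$ and permutation matrices $T,T'$ with $DWD'=TW'T'$. *)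

theory Defs
  imports Complex_Main
begin

text \<open>An association scheme on the finite nonempty set X with classes R 0, ..., R d.
  Matrices indexed by X are represented as functions of type 'a => 'a => complex.\<close>

definition assoc_scheme :: "'a set \<Rightarrow> nat \<Rightarrow> (nat \<Rightarrow> ('a \<times> 'a) set) \<Rightarrow> bool" where
  "assoc_scheme X d R \<longleftrightarrow>
     finite X \<and> X \<noteq> {} \<and>
     R 0 = {(x, x) | x. x \<in> X} \<and>
     (\<forall>i\<le>d. R i \<noteq> {} \<and> R i \<subseteq> X \<times> X) \<and>
     (\<forall>i\<le>d. \<forall>j\<le>d. i \<noteq> j \<longrightarrow> R i \<inter> R j = {}) \<and>
     (\<Union>i\<le>d. R i) = X \<times> X \<and>
     (\<forall>i\<le>d. \<exists>j\<le>d. (R i)\<inverse> = R j) \<and>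
     (\<forall>i\<le>d. \<forall>j\<le>d. \<forall>k\<le>d. \<exists>p::nat. \<forall>(x, y) \<in> R k.
        card {z \<in> X. (x, z) \<in> R i \<and> (z, y) \<in> R j} = p)"

definition inter_num :: "'a set \<Rightarrow> (nat \<Rightarrow> ('a \<times> 'a) set) \<Rightarrow> nat \<Rightarrow> nat \<Rightarrow> nat \<Rightarrow> nat" where
  "inter_num X R i j k =
     (let (x, y) = (SOME xy. xy \<in> R k) in card {z \<in> X. (x, z) \<in> R i \<and> (z, y) \<in> R j})"

definition valency :: "'a set \<Rightarrow> (nat \<Rightarrow> ('a \<times> 'a) set) \<Rightarrow> nat \<Rightarrow> nat" where
  "valency X R i = (let x = (SOME x. x \<in> X) in card {y \<in> X. (x, y) \<in> R i})"

definition adj_mat :: "(nat \<Rightarrow> ('a \<times> 'a) set) \<Rightarrow> nat \<Rightarrow> 'a \<Rightarrow> 'a \<Rightarrow> complex" where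
  "adj_mat R i x y = (if (x, y) \<in> R i then 1 else 0)"

definition bm_elem :: "nat \<Rightarrow> (nat \<Rightarrow> ('a \<times> 'a) set) \<Rightarrow> (nat \<Rightarrow> complex) \<Rightarrow> 'a \<Rightarrow> 'a \<Rightarrow> complex" where
  "bm_elem d R w x y = (\<Sum>i\<le>d. w i * adj_mat R i x y)"

text \<open>Type-II matrix: nonzero entries and W (W^(-))^T = |X| I.\<close>
definition type_II :: "'a set \<Rightarrow> ('a \<Rightarrow> 'a \<Rightarrow> complex) \<Rightarrow> bool" where
  "type_II X W \<longleftrightarrow>
     (\<forall>x\<in>X. \<forall>y\<in>X. W x y \<noteq> 0) \<and>
     (\<forall>x\<in>X. \<forall>y\<in>X. (\<Sum>z\<in>X. W x z * inverse (W y z)) = (if x = y then of_nat (card X) else 0))"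

text \<open>Equivalence: D W D' = T W' T' with D, D' invertible diagonal and T, T' permutation
  matrices; entrywise, with T e_{sigma x} rows and T' columns given by bijections of X.\<close>
definition type_II_equiv :: "'a set \<Rightarrow> ('a \<Rightarrow> 'a \<Rightarrow> complex) \<Rightarrow> ('a \<Rightarrow> 'a \<Rightarrow> complex) \<Rightarrow> bool" where
  "type_II_equiv X W W' \<longleftrightarrow>
     (\<exists>D D' :: 'a \<Rightarrow> complex. \<exists>\<sigma> \<tau> :: 'a \<Rightarrow> 'a.
        (\<forall>x\<in>X. D x \<noteq> 0 \<and> D' x \<noteq> 0) \<and> bij_betw \<sigma> X X \<and> bij_betw \<tau> X X \<and>
        (\<forall>x\<in>X. \<forall>y\<in>X. D x * W x y * D' y = W' (\<sigma> x) (\<tau> y)))"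

end

theory Submission
  imports Defs
begin
lemma as_fin: "assoc_scheme X d R \<Longrightarrow> finite X" by (simp add: assoc_scheme_def)
lemma as_ne: "assoc_scheme X d R \<Longrightarrow> X \<noteq> {}" by (simp add: assoc_scheme_def)
lemma as_R0: "assoc_scheme X d R \<Longrightarrow> R 0 = {(x, x) | x. x \<in> X}" by (simp add: assoc_scheme_def)

lemma as_sub: "assoc_scheme X d R \<Longrightarrow> \<forall>i\<le>d. R i \<noteq> {} \<and> R i \<subseteq> X \<times> X"
  unfolding assoc_scheme_def by (elim conjE) assumption
lemma as_disj: "assoc_scheme X d R \<Longrightarrow> \<forall>i\<le>d. \<forall>j\<le>d. i \<noteq> j \<longrightarrow> R i \<inter> R j = {}"
  unfolding assoc_scheme_def by (elim conjE) assumption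
lemma as_conv: "assoc_scheme X d R \<Longrightarrow> \<forall>i\<le>d. \<exists>j\<le>d. (R i)\<inverse> = R j"
  unfolding assoc_scheme_def by (elim conjE) assumption
lemma as_reg: "assoc_scheme X d R \<Longrightarrow> \<forall>i\<le>d. \<forall>j\<le>d. \<forall>k\<le>d. \<exists>p::nat. \<forall>(x, y) \<in> R k.
        card {z \<in> X. (x, z) \<in> R i \<and> (z, y) \<in> R j} = p"
  unfolding assoc_scheme_def by (elim conjE) assumption

lemma rel_exists:
  assumes "assoc_scheme X d R" "x \<in> X" "y \<in> X"
  shows "\<exists>i\<le>d. (x,y) \<in> R i"
proof -
  have "(\<Union>i\<le>d. R i) = X \<times> X" using assms(1) by (simp add: assoc_scheme_def)
  then have "(x,y) \<in> (\<Union>i\<le>d. R i)" using assms by auto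
  then show ?thesis by auto
qed

lemma rel_unique:
  assumes "assoc_scheme X d R" "i \<le> d" "j \<le> d" "(x,y) \<in> R i" "(x,y) \<in> R j"
  shows "i = j"
  using as_disj[OF assms(1)] assms(2-5) by blast

lemma rel_sub:
  assumes "assoc_scheme X d R" "i \<le> d" "(x,y) \<in> R i"
  shows "x \<in> X \<and> y \<in> X"
  using as_sub[OF assms(1)] assms(2-3) by blast

lemma rel_ne:
  assumes "assoc_scheme X d R" "i \<le> d"
  shows "R i \<noteq> {}"
  using as_sub[OF assms(1)] assms(2) by blast

lemma bm_val:
  assumes "assoc_scheme X d R" "i \<le> d" "(x,y) \<in> R i"
  shows "bm_elem d R w x y = w i"
proof -
  have "bm_elem d R w x y = (\<Sum>l\<le>d. (if l = i then w i else 0))"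
    unfolding bm_elem_def
  proof (rule sum.cong)
    fix l assume "l \<in> {..d}"
    then have "l \<le> d" by simp
    show "w l * adj_mat R l x y = (if l = i then w i else 0)"
    proof (cases "l = i")
      case True then show ?thesis using assms(3) by (simp add: adj_mat_def)
    next
      case False
      then have "(x,y) \<notin> R l" using rel_unique[OF assms(1) \<open>l \<le> d\<close> assms(2) _ assms(3)] by blast
      then show ?thesis using False by (simp add: adj_mat_def)
    qed
  qed simp
  also have "\<dots> = w i" using assms(2) by simp
  finally show ?thesis .
qed

lemma outdeg:
  assumes "assoc_scheme X d R" "i \<le> d" "x \<in> X"
  shows "card {y\<in>X. (x,y) \<in> R i} = valency X R i"
proof -
  obtain j where j: "j \<le> d" "(R i)\<inverse> = R j" using as_conv[OF assms(1)] assms(2) by blast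
  obtain p where p: "\<forall>(a,b)\<in>R 0. card {z \<in> X. (a, z) \<in> R i \<and> (z, b) \<in> R j} = p"
    using as_reg[OF assms(1)] assms(2) j(1) by blast
  have gen: "card {y\<in>X. (a,y) \<in> R i} = p" if "a \<in> X" for a
  proof -
    have "(a,a) \<in> R 0" using as_R0[OF assms(1)] that by auto
    then have "card {z \<in> X. (a, z) \<in> R i \<and> (z, a) \<in> R j} = p" using p by auto
    moreover have "{z \<in> X. (a, z) \<in> R i \<and> (z, a) \<in> R j} = {y\<in>X. (a,y) \<in> R i}"
      using j(2) by auto
    ultimately show ?thesis by simp
  qed
  have "(SOME x. x \<in> X) \<in> X" using as_ne[OF assms(1)] by (simp add: some_in_eq)
  then show ?thesis unfolding valency_def Let_def using gen assms(3) by simp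
qed

lemma card_rel:
  assumes "assoc_scheme X d R" "i \<le> d"
  shows "card (R i) = card X * valency X R i"
proof -
  have e: "R i = Sigma X (\<lambda>x. {y\<in>X. (x,y) \<in> R i})"
    using rel_sub[OF assms] by auto
  have "card (R i) = card (Sigma X (\<lambda>x. {y\<in>X. (x,y) \<in> R i}))"
    using e by (rule arg_cong)
  also have "\<dots> = (\<Sum>x\<in>X. card {y\<in>X. (x,y) \<in> R i})"
    by (rule card_SigmaI) (use as_fin[OF assms(1)] in auto)
  also have "\<dots> = (\<Sum>x\<in>X. valency X R i)" using outdeg[OF assms] by simp
  finally show ?thesis by simp
qed

lemma sym1:
  assumes "assoc_scheme X d R" "1 \<le> d" "inj_on (valency X R) {0..d}"
  shows "(R 1)\<inverse> = R 1"
proof -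
  obtain j where j: "j \<le> d" "(R 1)\<inverse> = R j" using as_conv[OF assms(1)] assms(2) by blast
  have "card (R j) = card (R 1)" using j(2) by (metis card_inverse)
  then have "card X * valency X R j = card X * valency X R 1"
    using card_rel[OF assms(1) j(1)] card_rel[OF assms(1,2)] by simp
  moreover have "card X > 0" using as_fin[OF assms(1)] as_ne[OF assms(1)] by (simp add: card_gt_0_iff)
  ultimately have "valency X R j = valency X R 1" by simp
  then have "j = 1" using assms(3) j(1) assms(2) by (auto dest: inj_onD)
  then show ?thesis using j by simp
qed

lemma pnum:
  assumes "assoc_scheme X d R" "1 \<le> d" "i \<le> d" "(a,b) \<in> R i"
  shows "card {z\<in>X. (a,z) \<in> R 1 \<and> (z,b) \<in> R 1} = inter_num X R 1 1 i"
proof -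
  obtain p where p: "\<forall>(x,y)\<in>R i. card {z \<in> X. (x, z) \<in> R 1 \<and> (z, y) \<in> R 1} = p"
    using as_reg[OF assms(1)] assms(2,3) by blast
  obtain x0 y0 where xy: "(SOME xy. xy \<in> R i) = (x0,y0)" by fastforce
  have "(SOME xy. xy \<in> R i) \<in> R i" using rel_ne[OF assms(1,3)] by (simp add: some_in_eq)
  then have "(x0,y0) \<in> R i" using xy by simp
  then have "card {z\<in>X. (x0,z) \<in> R 1 \<and> (z,y0) \<in> R 1} = p" using p by blast
  moreover have "card {z\<in>X. (a,z) \<in> R 1 \<and> (z,b) \<in> R 1} = p" using p assms(4) by blast
  ultimately show ?thesis unfolding inter_num_def xy by simp
qed

lemma common:
  assumes "assoc_scheme X d R" "1 \<le> d" "inj_on (valency X R) {0..d}"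
    "\<forall>i\<in>{1..d}. real (inter_num X R 1 1 i) > real (card X) / 2"
    "a \<in> X" "b \<in> X" "a \<noteq> b"
  shows "real (card {z\<in>X. (a,z) \<in> R 1 \<and> (b,z) \<in> R 1}) > real (card X) / 2"
    "real (card {z\<in>X. (z,a) \<in> R 1 \<and> (z,b) \<in> R 1}) > real (card X) / 2"
proof -
  have s: "(x,y) \<in> R 1 \<longleftrightarrow> (y,x) \<in> R 1" for x y
    using sym1[OF assms(1,2,3)] by blast
  obtain i where i: "i \<le> d" "(a,b) \<in> R i" using rel_exists[OF assms(1,5,6)] by blast
  have "i \<noteq> 0"
  proof
    assume "i = 0"
    then have "(a,b) \<in> R 0" using i by simp
    then show False using as_R0[OF assms(1)] assms(7) by blast
  qed
  then have "i \<in> {1..d}" using i by auto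
  then have gt: "real (inter_num X R 1 1 i) > real (card X) / 2" using assms(4) by blast
  have e: "card {z\<in>X. (a,z) \<in> R 1 \<and> (z,b) \<in> R 1} = inter_num X R 1 1 i"
    using pnum[OF assms(1,2) i] .
  have "{z\<in>X. (a,z) \<in> R 1 \<and> (b,z) \<in> R 1} = {z\<in>X. (a,z) \<in> R 1 \<and> (z,b) \<in> R 1}" using s by blast
  then show "real (card {z\<in>X. (a,z) \<in> R 1 \<and> (b,z) \<in> R 1}) > real (card X) / 2" using e gt by simp
  have "{z\<in>X. (z,a) \<in> R 1 \<and> (z,b) \<in> R 1} = {z\<in>X. (a,z) \<in> R 1 \<and> (z,b) \<in> R 1}" using s by blast
  then show "real (card {z\<in>X. (z,a) \<in> R 1 \<and> (z,b) \<in> R 1}) > real (card X) / 2" using e gt by simp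
qed

lemma majority_meet:
  assumes "finite X" "A \<subseteq> X" "B \<subseteq> X" "real (card A) > real (card X) / 2" "real (card B) > real (card X) / 2"
  shows "A \<inter> B \<noteq> {}"
proof
  assume "A \<inter> B = {}"
  then have "card (A \<union> B) = card A + card B"
    using assms by (meson card_Un_disjoint finite_subset)
  moreover have "card (A \<union> B) \<le> card X" using assms by (simp add: card_mono)
  ultimately show False using assms(4,5) by linarith
qed


theorem lemma5p7:
  fixes X :: "'a set" and d :: nat and R :: "nat \<Rightarrow> ('a \<times> 'a) set"
    and w w' :: "nat \<Rightarrow> complex"
  assumes "assoc_scheme X d R"
    and "1 \<le> d"
    and "type_II X (bm_elem d R w)"
    and "type_II X (bm_elem d R w')"
    and "inj_on w {0..d}"
    and "inj_on w' {0..d}"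
    and "inj_on (valency X R) {0..d}"
    and "\<forall>i\<in>{1..d}. real (inter_num X R 1 1 i) > real (card X) / 2"
    and "type_II_equiv X (bm_elem d R w) (bm_elem d R w')"
  shows "\<exists>c::complex. \<forall>x\<in>X. \<forall>y\<in>X. bm_elem d R w x y = c * bm_elem d R w' x y"
proof -
  note as = assms(1)
  define W where "W = bm_elem d R w"
  define W' where "W' = bm_elem d R w'"
  obtain D D' :: "'a \<Rightarrow> complex" and \<sigma> \<tau> :: "'a \<Rightarrow> 'a" where
    DD: "\<forall>x\<in>X. D x \<noteq> 0 \<and> D' x \<noteq> 0" and bs: "bij_betw \<sigma> X X" and bt: "bij_betw \<tau> X X" and
    eq: "\<forall>x\<in>X. \<forall>y\<in>X. D x * W x y * D' y = W' (\<sigma> x) (\<tau> y)"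
    using assms(9) unfolding type_II_equiv_def W_def W'_def by blast
  have fin: "finite X" using as_fin[OF as] .
  have nzW: "\<forall>x\<in>X. \<forall>y\<in>X. W x y \<noteq> 0" using assms(3) unfolding type_II_def W_def by blast
  have sX: "\<sigma> x \<in> X" if "x \<in> X" for x using bs that bij_betwE by blast
  have tX: "\<tau> x \<in> X" if "x \<in> X" for x using bt that bij_betwE by blast
  have si: "inj_on \<sigma> X" using bs bij_betw_def by blast
  have ti: "inj_on \<tau> X" using bt bij_betw_def by blast
  have R1X: "(a,b) \<in> R 1 \<Longrightarrow> a \<in> X \<and> b \<in> X" for a b using rel_sub[OF as assms(2)] by blast
  have W1: "W a b = w 1" if "(a,b) \<in> R 1" for a b using bm_val[OF as assms(2) that] W_def by simp
  have W'1: "W' a b = w' 1" if "(a,b) \<in> R 1" for a b using bm_val[OF as assms(2) that] W'_def by simp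
  have Dc: "D x = D x'" if "x \<in> X" "x' \<in> X" for x x'
  proof (cases "x = x'")
    case False
    define S where "S = {z\<in>X. (x,z) \<in> R 1 \<and> (x',z) \<in> R 1}"
    define T where "T = {v\<in>X. (\<sigma> x,v) \<in> R 1 \<and> (\<sigma> x',v) \<in> R 1}"
    have cS: "real (card S) > real (card X) / 2" unfolding S_def
      using common(1)[OF as assms(2,7,8) that False] .
    have "\<sigma> x \<noteq> \<sigma> x'" using False si that inj_on_eq_iff by metis
    then have cT: "real (card T) > real (card X) / 2" unfolding T_def
      using common(1)[OF as assms(2,7,8) sX[OF that(1)] sX[OF that(2)]] by blast
    have "card (\<tau> ` S) = card S" using ti by (rule card_image[OF inj_on_subset]) (auto simp: S_def)
    moreover have "\<tau> ` S \<subseteq> X" using tX S_def by auto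
    moreover have "T \<subseteq> X" using T_def by auto
    ultimately have "\<tau> ` S \<inter> T \<noteq> {}" using majority_meet[OF fin] cS cT by simp
    then obtain z where z: "z \<in> S" "\<tau> z \<in> T" by blast
    have zX: "z \<in> X" using z S_def by auto
    have "D x * W x z * D' z = D x' * W x' z * D' z"
      using eq that zX z W'1 unfolding S_def T_def by (metis (no_types, lifting) mem_Collect_eq)
    moreover have "W x z = W x' z" using z W1 unfolding S_def by simp
    moreover have "W x z \<noteq> 0" using nzW that zX by blast
    moreover have "D' z \<noteq> 0" using zX DD by blast
    ultimately show ?thesis by simp
  qed simp
  have D'c: "D' y = D' y'" if "y \<in> X" "y' \<in> X" for y y'
  proof (cases "y = y'")
    case False
    define S where "S = {z\<in>X. (z,y) \<in> R 1 \<and> (z,y') \<in> R 1}"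
    define T where "T = {v\<in>X. (v,\<tau> y) \<in> R 1 \<and> (v,\<tau> y') \<in> R 1}"
    have cS: "real (card S) > real (card X) / 2" unfolding S_def
      using common(2)[OF as assms(2,7,8) that False] .
    have "\<tau> y \<noteq> \<tau> y'" using False ti that inj_on_eq_iff by metis
    then have cT: "real (card T) > real (card X) / 2" unfolding T_def
      using common(2)[OF as assms(2,7,8) tX[OF that(1)] tX[OF that(2)]] by blast
    have "card (\<sigma> ` S) = card S" using si by (rule card_image[OF inj_on_subset]) (auto simp: S_def)
    moreover have "\<sigma> ` S \<subseteq> X" using sX S_def by auto
    moreover have "T \<subseteq> X" using T_def by auto
    ultimately have "\<sigma> ` S \<inter> T \<noteq> {}" using majority_meet[OF fin] cS cT by simp
    then obtain z where z: "z \<in> S" "\<sigma> z \<in> T" by blast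
    have zX: "z \<in> X" using z S_def by auto
    have "D z * W z y * D' y = D z * W z y' * D' y'"
      using eq that zX z W'1 unfolding S_def T_def by (metis (no_types, lifting) mem_Collect_eq)
    moreover have "W z y = W z y'" using z W1 unfolding S_def by simp
    moreover have "W z y \<noteq> 0" using nzW that zX by blast
    moreover have "D z \<noteq> 0" using zX DD by blast
    ultimately show ?thesis by simp
  qed simp
  obtain x0 where x0: "x0 \<in> X" using as_ne[OF as] by blast
  define c where "c = D x0 * D' x0"
  have c0: "c \<noteq> 0" using DD x0 c_def by simp
  have key: "W' (\<sigma> x) (\<tau> y) = c * W x y" if "x \<in> X" "y \<in> X" for x y
  proof -
    have "W' (\<sigma> x) (\<tau> y) = D x * W x y * D' y" using eq that by simp
    also have "\<dots> = D x0 * W x y * D' x0" using Dc[OF that(1) x0] D'c[OF that(2) x0] by simp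
    finally show ?thesis unfolding c_def by simp
  qed
  have wi: "w' i = c * w i" if i: "i \<le> d" for i
  proof -
    define u where "u = \<sigma> x0"
    have uX: "u \<in> X" using sX x0 u_def by simp
    define A where "A = {y\<in>X. (x0,y) \<in> R i}"
    have cA: "card A = valency X R i" using outdeg[OF as i x0] A_def by simp
    obtain a b where ab: "(a,b) \<in> R i" using rel_ne[OF as i] by auto
    have aX: "a \<in> X" "b \<in> X" using rel_sub[OF as i ab] by auto
    have "card {y\<in>X. (a,y) \<in> R i} > 0" using ab aX fin by (auto simp: card_gt_0_iff)
    then have "card A > 0" using outdeg[OF as i aX(1)] cA by simp
    then obtain y where y: "y \<in> A" by (metis card.empty less_irrefl all_not_in_conv)
    have yX: "y \<in> X" using y A_def by simp
    obtain j where j: "j \<le> d" "(u, \<tau> y) \<in> R j" using rel_exists[OF as uX tX[OF yX]] by blast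
    have "w' j = c * w i"
      using key[OF x0 yX] bm_val[OF as j] bm_val[OF as i, of x0 y w] y A_def W_def W'_def u_def by simp
    define B where "B = {v\<in>X. (u,v) \<in> R j}"
    have cB: "card B = valency X R j" using outdeg[OF as j(1) uX] B_def by simp
    have "B = \<tau> ` A"
    proof
      show "\<tau> ` A \<subseteq> B"
      proof
        fix v assume "v \<in> \<tau> ` A"
        then obtain y' where y': "y' \<in> A" "v = \<tau> y'" by blast
        have y'X: "y' \<in> X" using y' A_def by simp
        obtain l where l: "l \<le> d" "(u, v) \<in> R l" using rel_exists[OF as uX tX[OF y'X]] y' by blast
        have "w' l = c * w i"
          using key[OF x0 y'X] bm_val[OF as l] bm_val[OF as i, of x0 y' w] y' A_def W_def W'_def u_def by simp
        then have "w' l = w' j" using \<open>w' j = c * w i\<close> by simp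
        then have "l = j" using assms(6) l(1) j(1) by (auto dest: inj_onD)
        then show "v \<in> B" using l B_def tX[OF y'X] y' by simp
      qed
    next
      show "B \<subseteq> \<tau> ` A"
      proof
        fix v assume v: "v \<in> B"
        then have vX: "v \<in> X" using B_def by simp
        then obtain y' where y': "y' \<in> X" "v = \<tau> y'" using bt by (metis bij_betw_imp_surj_on imageE)
        obtain l where l: "l \<le> d" "(x0, y') \<in> R l" using rel_exists[OF as x0 y'(1)] by blast
        have "c * w l = w' j"
          using key[OF x0 y'(1)] bm_val[OF as l] bm_val[OF as j(1)] v B_def W_def W'_def u_def y' by simp
        then have "c * w l = c * w i" using \<open>w' j = c * w i\<close> by simp
        then have "w l = w i" using c0 by simp
        then have "l = i" using assms(5) l(1) i by (auto dest: inj_onD)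
        then show "v \<in> \<tau> ` A" using l A_def y' by auto
      qed
    qed
    then have "card B = card A" using card_image[OF inj_on_subset[OF ti]] A_def by auto
    then have "valency X R j = valency X R i" using cA cB by simp
    then have "j = i" using assms(7) i j(1) by (auto dest: inj_onD)
    then show ?thesis using \<open>w' j = c * w i\<close> by simp
  qed
  show ?thesis
  proof (intro exI ballI)
    fix x y assume xy: "x \<in> X" "y \<in> X"
    obtain i where i: "i \<le> d" "(x,y) \<in> R i" using rel_exists[OF as xy] by blast
    have "bm_elem d R w x y = w i" using bm_val[OF as i] .
    moreover have "bm_elem d R w' x y = c * w i" using bm_val[OF as i] wi[OF i(1)] by simp
    ultimately show "bm_elem d R w x y = inverse c * bm_elem d R w' x y" using c0 by simp
  qed
qed

end
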